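(* Let $q=2^m$ with $m\ge 3$. Consider the map $\tau$ sending a pair of integers $(q_1,q_2)$ with $q_1,q_2,q_1+q_2,q_1-q_2$ all $\not\equiv0\pmod q$ to $\tau(q_1,q_2)=\big(\psi(q_1,q_2),\alpha^{(1)}(q_1,q_2),\dots,\alpha^{(m-1)}(q_1,q_2)\big)$. Then $\tau$ takes at most $(m-1)^2$ distinct values.
   Context: Let $\gamma=e^{2\pi i/q}$. Let $A$ be the set of odd residues in $\{1,\dots,q-1\}$, and for $1\le j\le m-1$ let $B_j=\{x\in\{1,\dots,q-1\}: 2^j\mid x,\ 2^{j+1}\nmid x\}$. Define $\psi(q_1,q_2)(z)=\sum_{l\in A}\prod_{i=1}^{2}(z-\gamma^{q_il})(z-\gamma^{-q_il})$ and $\alpha^{(j)}(q_1,q_2)(z)=\sum_{l\in B_j}\prod_{i=1}^{2}(z-\gamma^{q_il})(z-\gamma^{-q_il})$. *)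

theory Defs
  imports Complex_Main "HOL-Computational_Algebra.Polynomial"
begin

definition gam :: "nat \<Rightarrow> complex" where
  "gam q = exp (2 * of_real pi * \<i> / of_nat q)"

definition oddRes :: "nat \<Rightarrow> nat set" where
  "oddRes q = {l \<in> {1..q-1}. odd l}"

definition Bset :: "nat \<Rightarrow> nat \<Rightarrow> nat set" where
  "Bset q j = {x \<in> {1..q-1}. 2^j dvd x \<and> \<not> 2^(j+1) dvd x}"

definition factorPoly :: "nat \<Rightarrow> int \<Rightarrow> int \<Rightarrow> nat \<Rightarrow> complex poly" where
  "factorPoly q q1 q2 l =
    
     ([:- (gam q powi (q1 * int l)), 1:] * [:- (gam q powi (- q1 * int l)), 1:]) *
     ([:- (gam q powi (q2 * int l)), 1:] * [:- (gam q powi (- q2 * int l)), 1:])"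

definition psiPoly :: "nat \<Rightarrow> int \<Rightarrow> int \<Rightarrow> complex poly" where
  "psiPoly q q1 q2 = (\<Sum>l\<in>oddRes q. factorPoly q q1 q2 l)"

definition alphaPoly :: "nat \<Rightarrow> nat \<Rightarrow> int \<Rightarrow> int \<Rightarrow> complex poly" where
  "alphaPoly q j q1 q2 = (\<Sum>l\<in>Bset q j. factorPoly q q1 q2 l)"

definition tau :: "nat \<Rightarrow> int \<Rightarrow> int \<Rightarrow> complex poly list" where
  "tau m q1 q2 = psiPoly (2^m) q1 q2 # map (\<lambda>j. alphaPoly (2^m) j q1 q2) [1..<m]"

end

theory Submission
  imports Defs "HOL-Computational_Algebra.Primes"
begin


abbreviation v2 :: "int \<Rightarrow> nat" where "v2 n \<equiv> multiplicity (2::int) n"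

lemma v2_pow_odd: assumes "odd (u::int)" shows "v2 (2^k * u) = k"
proof -
  have "u \<noteq> 0" using assms by auto
  then have "v2 (2^k * u) = v2 (2^k) + v2 u"
    by (intro prime_elem_multiplicity_mult_distrib) auto
  moreover have "v2 u = 0" using assms by (simp add: not_dvd_imp_multiplicity_0)
  moreover have "v2 (2^k) = k" by (simp add: prime_elem_multiplicity_power_distrib)
  ultimately show ?thesis by simp
qed

lemma v2_decomp: assumes "(n::int) \<noteq> 0" obtains u where "odd u" "n = 2^(v2 n) * u"
  using multiplicity_decompose'[of n 2] assms that by auto

lemma v2_uminus: assumes "n \<noteq> 0" shows "v2 (- n) = v2 n"
proof -
  obtain u where "odd u" "n = 2^(v2 n) * u" using v2_decomp assms by blast
  then have "- n = 2^(v2 n) * (-u)" by simp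
  then show ?thesis using v2_pow_odd[of "-u" "v2 n"] \<open>odd u\<close> by simp
qed

lemma v2_lt: assumes "\<not> (2::int)^m dvd n" "n \<noteq> 0" shows "v2 n < m"
  using assms multiplicity_dvd'[of m "2::int" n] by force

lemma v2_mult_pow: assumes "(t::int) \<noteq> 0" shows "v2 (2^k * t) = k + v2 t"
proof -
  have "v2 (2^k * t) = v2 (2^k) + v2 t"
    using assms by (intro prime_elem_multiplicity_mult_distrib) auto
  then show ?thesis by (simp add: prime_elem_multiplicity_power_distrib)
qed

lemma v2_lt_sum: assumes "q1 \<noteq> 0" "q2 \<noteq> 0" "v2 q1 < v2 q2"
  shows "v2 (q1 + q2) = v2 q1 \<and> v2 (q1 - q2) = v2 q1"
proof -
  obtain u1 where u1: "odd u1" "q1 = 2^(v2 q1) * u1" using v2_decomp assms(1) by blast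
  obtain u2 where u2: "odd u2" "q2 = 2^(v2 q2) * u2" using v2_decomp assms(2) by blast
  define a where "a = v2 q1"
  define d where "d = v2 q2 - a"
  have d: "d \<ge> 1" "v2 q2 = a + d" using assms(3) unfolding a_def d_def by auto
  have e: "even ((2::int)^d)" using d by simp
  have "q1 + q2 = 2^a * (u1 + 2^d * u2)" using u1 u2 d a_def by (simp add: power_add algebra_simps)
  moreover have "odd (u1 + 2^d * u2)" using e u1 by simp
  moreover have "q1 - q2 = 2^a * (u1 - 2^d * u2)" using u1 u2 d a_def by (simp add: power_add algebra_simps)
  moreover have "odd (u1 - 2^d * u2)" using e u1 by simp
  ultimately show ?thesis using v2_pow_odd a_def by metis
qed

lemma v2_eq_sum: assumes "q1 \<noteq> 0" "q2 \<noteq> 0" "q1 + q2 \<noteq> 0" "q1 - q2 \<noteq> 0" "v2 q1 = v2 q2"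
  shows "(v2 (q1 + q2) = v2 q1 + 1 \<and> v2 (q1 - q2) \<ge> v2 q1 + 2) \<or>
         (v2 (q1 - q2) = v2 q1 + 1 \<and> v2 (q1 + q2) \<ge> v2 q1 + 2)"
proof -
  define a where "a = v2 q1"
  obtain u1 where u1: "odd u1" "q1 = 2^a * u1" using v2_decomp assms(1) a_def by blast
  obtain u2 where u2: "odd u2" "q2 = 2^a * u2" using v2_decomp assms(2) assms(5) a_def by metis
  have "even (u1 + u2)" using u1 u2 by simp
  then obtain s where s: "u1 + u2 = 2 * s" by (rule evenE)
  have "even (u1 - u2)" using u1 u2 by simp
  then obtain t where t: "u1 - u2 = 2 * t" by (rule evenE)
  have st: "s + t = u1" using s t by simp
  have "q1 + q2 = 2^a * (u1 + u2)" using u1 u2 by (simp add: distrib_left)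
  also have "\<dots> = 2^(a+1) * s" using s by simp
  finally have p: "q1 + q2 = 2^(a+1) * s" .
  have "q1 - q2 = 2^a * (u1 - u2)" using u1 u2 by (simp add: right_diff_distrib)
  also have "\<dots> = 2^(a+1) * t" using t by simp
  finally have m: "q1 - q2 = 2^(a+1) * t" .
  have s0: "s \<noteq> 0" using p assms(3) by auto
  have t0: "t \<noteq> 0" using m assms(4) by auto
  have vp: "v2 (q1 + q2) = a + 1 + v2 s" using v2_mult_pow[OF s0, of "a+1"] p by simp
  have vm: "v2 (q1 - q2) = a + 1 + v2 t" using v2_mult_pow[OF t0, of "a+1"] m by simp
  show ?thesis
  proof (cases "odd s")
    case True
    then have "even t" using st u1 by auto
    then have "v2 t > 0" using t0 by (subst multiplicity_gt_zero_iff) auto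
    moreover have "v2 s = 0" using True by (simp add: not_dvd_imp_multiplicity_0)
    ultimately show ?thesis using vp vm a_def by simp
  next
    case False
    then have "odd t" using st u1 by auto
    have "v2 s > 0" using s0 False by (subst multiplicity_gt_zero_iff) auto
    moreover have "v2 t = 0" using \<open>odd t\<close> by (simp add: not_dvd_imp_multiplicity_0)
    ultimately show ?thesis using vp vm a_def by simp
  qed
qed



lemma poly_id: fixes x y :: complex assumes "x \<noteq> 0" "y \<noteq> 0"
  shows "([:-x,1:]*[:-inverse x,1:])*([:-y,1:]*[:-inverse y,1:]) = [:1,0,2,0,1:] + smult (x+inverse x+y+inverse y) [:0,-1,0,-1:] + smult (x*y + x*inverse y + inverse x * y + inverse x*inverse y) [:0,0,1:]"
proof -
  have a: "[:-x,1:]*[:-inverse x,1:] = [:1, -(x + inverse x), 1:]" using assms(1) by (simp add: algebra_simps)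
  have b: "[:-y,1:]*[:-inverse y,1:] = [:1, -(y + inverse y), 1:]" using assms(2) by (simp add: algebra_simps)
  show ?thesis unfolding a b by (simp add: algebra_simps)
qed

lemma gam_nz: "gam q \<noteq> 0" by (simp add: gam_def)

definition P0 :: "complex poly" where "P0 = [:1,0,2,0,1:]"
definition P1 :: "complex poly" where "P1 = [:0,-1,0,-1:]"
definition P2 :: "complex poly" where "P2 = [:0,0,1:]"

lemma factor_expand:
  "factorPoly q q1 q2 l = P0
     + smult (gam q powi (q1 * int l) + gam q powi (-q1 * int l) + gam q powi (q2 * int l) + gam q powi (-q2 * int l)) P1
     + smult (gam q powi ((q1+q2) * int l) + gam q powi ((q1-q2) * int l) + gam q powi ((-q1+q2) * int l) + gam q powi ((-q1-q2) * int l)) P2"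
proof -
  define x where "x = gam q powi (q1 * int l)"
  define y where "y = gam q powi (q2 * int l)"
  have x0: "x \<noteq> 0" and y0: "y \<noteq> 0" unfolding x_def y_def using gam_nz by auto
  have e1: "gam q powi (-q1 * int l) = inverse x" unfolding x_def by (simp add: power_int_minus)
  have e2: "gam q powi (-q2 * int l) = inverse y" unfolding y_def by (simp add: power_int_minus)
  have e3: "gam q powi ((q1+q2) * int l) = x * y" unfolding x_def y_def
    using gam_nz by (simp add: distrib_right power_int_add)
  have e4: "gam q powi ((q1-q2) * int l) = x * inverse y" unfolding x_def y_def
    using gam_nz by (simp add: left_diff_distrib power_int_diff field_simps)
  have e5: "gam q powi ((-q1+q2) * int l) = inverse x * y" unfolding x_def y_def
    using gam_nz by (simp add: left_diff_distrib power_int_diff field_simps)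
  have e6: "gam q powi ((-q1-q2) * int l) = inverse x * inverse y" unfolding x_def y_def
    using gam_nz by (simp add: left_diff_distrib power_int_diff power_int_minus field_simps)
  show ?thesis unfolding factorPoly_def e1 e2 e3 e4 e5 e6 P0_def P1_def P2_def
    using poly_id[OF x0 y0] unfolding x_def y_def by simp
qed

definition CS :: "nat \<Rightarrow> nat set \<Rightarrow> int \<Rightarrow> complex" where
  "CS q S n = (\<Sum>l\<in>S. gam q powi (n * int l))"

lemma sum_expand:
  "(\<Sum>l\<in>S. factorPoly q q1 q2 l) = smult (of_nat (card S)) P0
     + smult (CS q S q1 + CS q S (-q1) + CS q S q2 + CS q S (-q2)) P1
     + smult (CS q S (q1+q2) + CS q S (q1-q2) + CS q S (-q1+q2) + CS q S (-q1-q2)) P2"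
  unfolding factor_expand CS_def
  by (simp add: sum.distrib smult_sum[symmetric] smult_add_left of_nat_poly)

lemma gam_pow_q: assumes "q > 0" shows "gam q ^ q = 1"
proof -
  have "gam q ^ q = exp (of_nat q * (2 * of_real pi * \<i> / of_nat q))"
    unfolding gam_def by (rule exp_of_nat_mult[symmetric])
  also have "\<dots> = exp (2 * of_real pi * \<i>)" using assms by simp
  finally show ?thesis by simp
qed

lemma gam_powi_mod: assumes "q > 0" shows "gam q powi a = gam q powi (a mod int q)"
proof -
  have "a = a mod int q + int q * (a div int q)" by simp
  then have "gam q powi a = gam q powi (a mod int q) * (gam q powi int q) powi (a div int q)"
    using gam_nz by (metis power_int_add power_int_mult)
  also have "gam q powi int q = 1" using gam_pow_q[OF assms] by (simp add: power_int_of_nat)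
  finally show ?thesis by simp
qed

definition good :: "nat \<Rightarrow> nat set \<Rightarrow> bool" where
 "good q S \<longleftrightarrow> S \<subseteq> {1..q-1} \<and> (\<forall>u l. odd (u::int) \<longrightarrow> l \<in> S \<longrightarrow> nat ((u * int l) mod int q) \<in> S)"

lemma CS_odd: assumes "good (2^m) S" "odd u" shows "CS (2^m) S (n*u) = CS (2^m) S n"
proof -
  define q :: nat where "q = 2^m"
  have qpos: "q > 0" unfolding q_def by simp
  define \<sigma> where "\<sigma> = (\<lambda>l. nat ((u * int l) mod int q))"
  have Ssub: "S \<subseteq> {1..q-1}" using assms(1) unfolding good_def q_def by auto
  have fin: "finite S" using Ssub finite_subset by blast
  have cop: "coprime (int q) u"
  proof -
    have "coprime 2 u" using assms(2) by (simp add: coprime_commute)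
    then show ?thesis unfolding q_def by simp
  qed
  have inj: "inj_on \<sigma> S"
  proof (rule inj_onI)
    fix l l' assume l: "l \<in> S" and l': "l' \<in> S" and e: "\<sigma> l = \<sigma> l'"
    have "(u * int l) mod int q = (u * int l') mod int q"
      using e qpos unfolding \<sigma>_def by (simp add: nat_eq_iff2)
    then have "int q dvd u * int l - u * int l'" by (simp add: mod_eq_dvd_iff)
    then have "int q dvd u * (int l - int l')" by (simp add: right_diff_distrib)
    then have d: "int q dvd (int l - int l')" using cop by (simp add: coprime_dvd_mult_right_iff)
    have "l \<in> {1..q-1}" "l' \<in> {1..q-1}" using l l' Ssub by auto
    then have "l < q" "l' < q" using qpos by auto
    then have lt: "\<bar>int l - int l'\<bar> < int q" by arith
    show "l = l'"
    proof (rule ccontr)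
      assume "l \<noteq> l'"
      then have "int l - int l' \<noteq> 0" by simp
      from dvd_imp_le_int[OF this d] lt show False by simp
    qed
  qed
  have sub: "\<sigma> ` S \<subseteq> S" using assms unfolding good_def \<sigma>_def q_def by auto
  have img: "\<sigma> ` S = S" using endo_inj_surj[OF fin sub inj] .
  have "CS q S n = (\<Sum>l\<in>\<sigma> ` S. gam q powi (n * int l))" unfolding CS_def img ..
  also have "\<dots> = (\<Sum>l\<in>S. gam q powi (n * int (\<sigma> l)))" using sum.reindex[OF inj] by simp
  also have "\<dots> = (\<Sum>l\<in>S. gam q powi ((n * u) * int l))"
  proof (rule sum.cong)
    fix l assume "l \<in> S"
    have "int (\<sigma> l) = (u * int l) mod int q" unfolding \<sigma>_def using qpos by simp
    then have "gam q powi (n * int (\<sigma> l)) = gam q powi ((n * ((u * int l) mod int q)) mod int q)"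
      using gam_powi_mod[OF qpos] by metis
    also have "(n * ((u * int l) mod int q)) mod int q = ((n * u) * int l) mod int q"
      by (simp add: mod_mult_right_eq mult.assoc)
    also have "gam q powi \<dots> = gam q powi ((n * u) * int l)" using gam_powi_mod[OF qpos] by metis
    finally show "gam q powi (n * int (\<sigma> l)) = gam q powi ((n * u) * int l)" .
  qed simp
  finally show ?thesis unfolding CS_def q_def by simp
qed

lemma nat_dvd_int: "r \<ge> 0 \<Longrightarrow> (k dvd nat r) \<longleftrightarrow> (int k dvd r)"
  by (metis int_nat_eq of_nat_dvd_iff)

lemma good_odd: assumes "m \<ge> 1" shows "good (2^m) (oddRes (2^m))"
  unfolding good_def
proof (intro conjI allI impI)
  show "oddRes (2^m) \<subseteq> {1..2^m-1}" unfolding oddRes_def by auto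
  fix u :: int and l assume u: "odd u" and l: "l \<in> oddRes (2^m)"
  define q :: nat where "q = 2^m"
  define r where "r = (u * int l) mod int q"
  have q2: "(2::int) dvd int q" unfolding q_def using assms by (simp add: dvd_power)
  have r0: "r \<ge> 0" "r < int q" unfolding r_def q_def by auto
  have "odd (u * int l)" using u l unfolding oddRes_def by auto
  then have "odd r" unfolding r_def using q2 by (simp add: dvd_mod_iff)
  then have "r \<noteq> 0" by auto
  then have "nat r \<in> {1..q-1}" "odd (nat r)" using r0 \<open>odd r\<close> by (auto simp: even_nat_iff)
  then show "nat ((u * int l) mod int (2^m)) \<in> oddRes (2^m)"
    unfolding oddRes_def r_def q_def by auto
qed

lemma good_B: assumes "j < m" shows "good (2^m) (Bset (2^m) j)"
  unfolding good_def
proof (intro conjI allI impI)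
  show "Bset (2^m) j \<subseteq> {1..2^m-1}" unfolding Bset_def by auto
  fix u :: int and l assume u: "odd u" and l: "l \<in> Bset (2^m) j"
  define q :: nat where "q = 2^m"
  define r where "r = (u * int l) mod int q"
  have d1: "(2::int)^j dvd int q" unfolding q_def using assms by (simp add: le_imp_power_dvd)
  have d2: "(2::int)^(j+1) dvd int q" unfolding q_def using assms le_imp_power_dvd[of "j+1" m "2::int"] by simp
  have r0: "r \<ge> 0" "r < int q" unfolding r_def q_def by auto
  have c1: "coprime ((2::int)^j) u" using u by (simp add: coprime_commute)
  have c2: "coprime ((2::int)^(j+1)) u" using u by (simp add: coprime_commute)
  have lj: "(2::int)^j dvd int l" "\<not> (2::int)^(j+1) dvd int l"
    using l unfolding Bset_def by (auto simp flip: of_nat_dvd_iff)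
  have a1: "(2::int)^j dvd r" unfolding r_def using d1 c1 lj
    by (simp add: dvd_mod_iff coprime_dvd_mult_right_iff)
  have a2: "\<not> (2::int)^(j+1) dvd r" unfolding r_def using d2 c2 lj
    by (simp add: dvd_mod_iff coprime_dvd_mult_right_iff)
  have "r \<noteq> 0" using a2 by auto
  then have "nat r \<in> {1..q-1}" using r0 by auto
  moreover have "2^j dvd nat r" using a1 r0 by (simp add: nat_dvd_int)
  moreover have "\<not> 2^(j+1) dvd nat r" using a2 r0 by (simp add: nat_dvd_int)
  ultimately show "nat ((u * int l) mod int (2^m)) \<in> Bset (2^m) j"
    unfolding Bset_def r_def q_def by auto
qed



lemma CS_v2: assumes "good (2^m) S" "n \<noteq> 0" shows "CS (2^m) S n = CS (2^m) S (2^(v2 n))"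
proof -
  obtain u where "odd u" "n = 2^(v2 n) * u" using v2_decomp assms(2) by blast
  then show ?thesis using CS_odd[OF assms(1), of u "2^(v2 n)"] by simp
qed

lemma sum_v2:
  assumes "good (2^m) S" "q1 \<noteq> 0" "q2 \<noteq> 0" "q1 + q2 \<noteq> 0" "q1 - q2 \<noteq> 0"
  shows "(\<Sum>l\<in>S. factorPoly (2^m) q1 q2 l) = smult (of_nat (card S)) P0
     + smult (2 * (CS (2^m) S (2^(v2 q1)) + CS (2^m) S (2^(v2 q2)))) P1
     + smult (2 * (CS (2^m) S (2^(v2 (q1+q2))) + CS (2^m) S (2^(v2 (q1-q2))))) P2"
proof -
  have e1: "-q1 + q2 = -(q1 - q2)" "-q1 - q2 = -(q1+q2)" by simp_all
  have n: "-q1 \<noteq> 0" "-q2 \<noteq> 0" "-(q1 - q2) \<noteq> 0" "-(q1+q2) \<noteq> 0" using assms by auto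
  note c = CS_v2[OF assms(1)]
  have "CS (2^m) S (-q1) = CS (2^m) S (2^(v2 q1))" using c[OF n(1)] v2_uminus[OF assms(2)] by simp
  moreover have "CS (2^m) S (-q2) = CS (2^m) S (2^(v2 q2))" using c[OF n(2)] v2_uminus[OF assms(3)] by simp
  moreover have "CS (2^m) S (-(q1-q2)) = CS (2^m) S (2^(v2 (q1-q2)))" using c[OF n(3)] v2_uminus[OF assms(5)] by simp
  moreover have "CS (2^m) S (-(q1+q2)) = CS (2^m) S (2^(v2 (q1+q2)))" using c[OF n(4)] v2_uminus[OF assms(4)] by simp
  moreover note c[OF assms(2)] c[OF assms(3)] c[OF assms(4)] c[OF assms(5)]
  ultimately show ?thesis unfolding sum_expand e1 by (simp add: algebra_simps)
qed

definition pe :: "nat \<Rightarrow> nat \<Rightarrow> nat \<Rightarrow> nat \<Rightarrow> bool" where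
  "pe a b a' b' \<longleftrightarrow> (a = a' \<and> b = b') \<or> (a = b' \<and> b = a')"

lemma sum_pe:
  assumes "good (2^m) S" "q1 \<noteq> 0" "q2 \<noteq> 0" "q1 + q2 \<noteq> 0" "q1 - q2 \<noteq> 0"
    "p1 \<noteq> 0" "p2 \<noteq> 0" "p1 + p2 \<noteq> 0" "p1 - p2 \<noteq> 0"
    "pe (v2 q1) (v2 q2) (v2 p1) (v2 p2)" "pe (v2 (q1+q2)) (v2 (q1-q2)) (v2 (p1+p2)) (v2 (p1-p2))"
  shows "(\<Sum>l\<in>S. factorPoly (2^m) q1 q2 l) = (\<Sum>l\<in>S. factorPoly (2^m) p1 p2 l)"
  unfolding sum_v2[OF assms(1-5)] sum_v2[OF assms(1,6-9)]
  using assms(10,11) unfolding pe_def by (auto simp: algebra_simps)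

lemma tau_pe:
  assumes "m \<ge> 1" "q1 \<noteq> 0" "q2 \<noteq> 0" "q1 + q2 \<noteq> 0" "q1 - q2 \<noteq> 0"
    "p1 \<noteq> 0" "p2 \<noteq> 0" "p1 + p2 \<noteq> 0" "p1 - p2 \<noteq> 0"
    "pe (v2 q1) (v2 q2) (v2 p1) (v2 p2)" "pe (v2 (q1+q2)) (v2 (q1-q2)) (v2 (p1+p2)) (v2 (p1-p2))"
  shows "tau m q1 q2 = tau m p1 p2"
proof -
  have "psiPoly (2^m) q1 q2 = psiPoly (2^m) p1 p2"
    unfolding psiPoly_def by (rule sum_pe[OF good_odd[OF assms(1)] assms(2-11)])
  moreover have "alphaPoly (2^m) j q1 q2 = alphaPoly (2^m) j p1 p2" if "j < m" for j
    unfolding alphaPoly_def by (rule sum_pe[OF good_B[OF that] assms(2-11)])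
  ultimately show ?thesis unfolding tau_def by simp
qed

definition gg :: "nat \<Rightarrow> nat \<Rightarrow> nat \<Rightarrow> nat \<Rightarrow> nat \<times> nat" where
  "gg a b c d = (if a < b then (a+1, b) else if b < a then (b+1, a) else (max c d, a+1))"

lemma comb:
  assumes "a<b \<Longrightarrow> c=a \<and> d=a" "b<a \<Longrightarrow> c=b \<and> d=b"
    "a=b \<Longrightarrow> (c=a+1 \<and> d\<ge>a+2) \<or> (d=a+1 \<and> c \<ge> a+2)"
   "a'<b' \<Longrightarrow> c'=a' \<and> d'=a'" "b'<a' \<Longrightarrow> c'=b' \<and> d'=b'"
    "a'=b' \<Longrightarrow> (c'=a'+1 \<and> d'\<ge>a'+2) \<or> (d'=a'+1 \<and> c' \<ge> a'+2)"
   "gg a b c d = gg a' b' c' d'"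
  shows "pe a b a' b' \<and> pe c d c' d'"
proof -
  consider "a < b" | "b < a" | "a = b" by linarith
  then show ?thesis
  proof cases
    case 1
    then have "c = a" "d = a" using assms(1) by auto
    consider "a' < b'" | "b' < a'" | "a' = b'" by linarith
    then show ?thesis
    proof cases
      case 1 then show ?thesis using assms(4,7) \<open>a<b\<close> \<open>c=a\<close> \<open>d=a\<close> by (auto simp: gg_def pe_def)
    next
      case 2 then show ?thesis using assms(5,7) \<open>a<b\<close> \<open>c=a\<close> \<open>d=a\<close> by (auto simp: gg_def pe_def)
    next
      case 3 then show ?thesis using assms(6,7) \<open>a<b\<close> by (auto simp: gg_def pe_def max_def split: if_splits)
    qed
  next
    case 2
    then have "c = b" "d = b" using assms(2) by auto
    consider "a' < b'" | "b' < a'" | "a' = b'" by linarith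
    then show ?thesis
    proof cases
      case 1 then show ?thesis using assms(4,7) \<open>b<a\<close> \<open>c=b\<close> \<open>d=b\<close> by (auto simp: gg_def pe_def)
    next
      case 2 then show ?thesis using assms(5,7) \<open>b<a\<close> \<open>c=b\<close> \<open>d=b\<close> by (auto simp: gg_def pe_def)
    next
      case 3 then show ?thesis using assms(6,7) \<open>b<a\<close> by (auto simp: gg_def pe_def max_def split: if_splits)
    qed
  next
    case 3
    consider "a' < b'" | "b' < a'" | "a' = b'" by linarith
    then show ?thesis
    proof cases
      case 1 then show ?thesis using assms(3,7) \<open>a=b\<close> by (auto simp: gg_def pe_def max_def split: if_splits)
    next
      case 2 then show ?thesis using assms(3,7) \<open>a=b\<close> by (auto simp: gg_def pe_def max_def split: if_splits)
    next
      case 3 then show ?thesis using assms(3,6,7) \<open>a=b\<close> by (auto simp: gg_def pe_def max_def split: if_splits)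
    qed
  qed
qed

lemma comb_range:
  assumes "a<m" "b<m" "c<m" "d<m" "a<b \<Longrightarrow> c=a \<and> d=a" "b<a \<Longrightarrow> c=b \<and> d=b"
    "a=b \<Longrightarrow> (c=a+1 \<and> d\<ge>a+2) \<or> (d=a+1 \<and> c \<ge> a+2)"
  shows "gg a b c d \<in> {1..m-1} \<times> {1..m-1}"
  using assms unfolding gg_def
  by (auto simp: max_def)


lemma vprops:
  assumes "q1 \<noteq> 0" "q2 \<noteq> 0" "q1 + q2 \<noteq> 0" "q1 - q2 \<noteq> 0"
  shows "(v2 q1 < v2 q2 \<longrightarrow> v2 (q1+q2) = v2 q1 \<and> v2 (q1-q2) = v2 q1) \<and>
         (v2 q2 < v2 q1 \<longrightarrow> v2 (q1+q2) = v2 q2 \<and> v2 (q1-q2) = v2 q2) \<and>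
         (v2 q1 = v2 q2 \<longrightarrow> (v2 (q1+q2) = v2 q1 + 1 \<and> v2 (q1-q2) \<ge> v2 q1 + 2) \<or>
             (v2 (q1-q2) = v2 q1 + 1 \<and> v2 (q1+q2) \<ge> v2 q1 + 2))"
proof -
  have A: "v2 (q1+q2) = v2 q1 \<and> v2 (q1-q2) = v2 q1" if "v2 q1 < v2 q2"
    using v2_lt_sum assms that by blast
  have B: "v2 (q1+q2) = v2 q2 \<and> v2 (q1-q2) = v2 q2" if l: "v2 q2 < v2 q1"
  proof -
    have "q1 - q2 = -(q2 - q1)" by simp
    then have "v2 (q1 - q2) = v2 (q2 - q1)" using v2_uminus assms(4) by (metis neg_equal_0_iff_equal)
    moreover have "q1 + q2 = q2 + q1" by simp
    ultimately show ?thesis using v2_lt_sum[OF assms(2,1) l] by (simp add: add.commute)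
  qed
  have C: "(v2 (q1+q2) = v2 q1 + 1 \<and> v2 (q1-q2) \<ge> v2 q1 + 2) \<or>
             (v2 (q1-q2) = v2 q1 + 1 \<and> v2 (q1+q2) \<ge> v2 q1 + 2)" if "v2 q1 = v2 q2"
    using v2_eq_sum assms that by blast
  show ?thesis using A B C by blast
qed

theorem proposition3p1p4:
  fixes m :: nat
  assumes "m \<ge> 3"
  defines "q \<equiv> (2::int) ^ m"
  shows "finite ((\<lambda>(q1, q2). tau m q1 q2) `
            {(q1::int, q2::int). \<not> q dvd q1 \<and> \<not> q dvd q2 \<and>
                                    \<not> q dvd (q1 + q2) \<and> \<not> q dvd (q1 - q2)})
       \<and> card ((\<lambda>(q1, q2). tau m q1 q2) `
            {(q1::int, q2::int). \<not> q dvd q1 \<and> \<not> q dvd q2 \<and>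
                                    \<not> q dvd (q1 + q2) \<and> \<not> q dvd (q1 - q2)}) \<le> (m - 1)^2"
proof -
  define D where "D = {(q1::int, q2::int). \<not> q dvd q1 \<and> \<not> q dvd q2 \<and>
                                    \<not> q dvd (q1 + q2) \<and> \<not> q dvd (q1 - q2)}"
  define f where "f = (\<lambda>(q1, q2). tau m q1 q2)"
  define h where "h = (\<lambda>(q1::int, q2::int). gg (v2 q1) (v2 q2) (v2 (q1+q2)) (v2 (q1-q2)))"
  have m1: "m \<ge> 1" using assms(1) by simp
  have Dp: "q1 \<noteq> 0 \<and> q2 \<noteq> 0 \<and> q1 + q2 \<noteq> 0 \<and> q1 - q2 \<noteq> 0 \<and>
      v2 q1 < m \<and> v2 q2 < m \<and> v2 (q1+q2) < m \<and> v2 (q1-q2) < m" if "(q1, q2) \<in> D" for q1 q2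
  proof -
    have nd: "\<not> q dvd q1" "\<not> q dvd q2" "\<not> q dvd (q1 + q2)" "\<not> q dvd (q1 - q2)"
      using that unfolding D_def by auto
    then have nz: "q1 \<noteq> 0" "q2 \<noteq> 0" "q1 + q2 \<noteq> 0" "q1 - q2 \<noteq> 0" by auto
    show ?thesis using nz v2_lt nd unfolding q_def by blast
  qed
  have hD: "h ` D \<subseteq> {1..m-1} \<times> {1..m-1}"
  proof
    fix k assume "k \<in> h ` D"
    then obtain q1 q2 where p: "(q1, q2) \<in> D" and k: "k = h (q1, q2)" by auto
    note P = Dp[OF p]
    have V: "(v2 q1 < v2 q2 \<longrightarrow> v2 (q1+q2) = v2 q1 \<and> v2 (q1-q2) = v2 q1) \<and>
         (v2 q2 < v2 q1 \<longrightarrow> v2 (q1+q2) = v2 q2 \<and> v2 (q1-q2) = v2 q2) \<and>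
         (v2 q1 = v2 q2 \<longrightarrow> (v2 (q1+q2) = v2 q1 + 1 \<and> v2 (q1-q2) \<ge> v2 q1 + 2) \<or>
             (v2 (q1-q2) = v2 q1 + 1 \<and> v2 (q1+q2) \<ge> v2 q1 + 2))"
      by (rule vprops) (use P in blast)+
    have "gg (v2 q1) (v2 q2) (v2 (q1+q2)) (v2 (q1-q2)) \<in> {1..m-1} \<times> {1..m-1}"
      by (rule comb_range) (use P V in blast)+
    then show "k \<in> {1..m-1} \<times> {1..m-1}" unfolding k h_def by simp
  qed
  have key: "f p = f p'" if "p \<in> D" "p' \<in> D" "h p = h p'" for p p'
  proof -
    obtain q1 q2 where p: "p = (q1, q2)" by (cases p)
    obtain p1 p2 where p': "p' = (p1, p2)" by (cases p')
    have pD: "(q1, q2) \<in> D" using that(1) p by simp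
    have pD': "(p1, p2) \<in> D" using that(2) p' by simp
    note P = Dp[OF pD] and P' = Dp[OF pD']
    have V: "(v2 q1 < v2 q2 \<longrightarrow> v2 (q1+q2) = v2 q1 \<and> v2 (q1-q2) = v2 q1) \<and>
         (v2 q2 < v2 q1 \<longrightarrow> v2 (q1+q2) = v2 q2 \<and> v2 (q1-q2) = v2 q2) \<and>
         (v2 q1 = v2 q2 \<longrightarrow> (v2 (q1+q2) = v2 q1 + 1 \<and> v2 (q1-q2) \<ge> v2 q1 + 2) \<or>
             (v2 (q1-q2) = v2 q1 + 1 \<and> v2 (q1+q2) \<ge> v2 q1 + 2))"
      by (rule vprops) (use P in blast)+
    have V': "(v2 p1 < v2 p2 \<longrightarrow> v2 (p1+p2) = v2 p1 \<and> v2 (p1-p2) = v2 p1) \<and>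
         (v2 p2 < v2 p1 \<longrightarrow> v2 (p1+p2) = v2 p2 \<and> v2 (p1-p2) = v2 p2) \<and>
         (v2 p1 = v2 p2 \<longrightarrow> (v2 (p1+p2) = v2 p1 + 1 \<and> v2 (p1-p2) \<ge> v2 p1 + 2) \<or>
             (v2 (p1-p2) = v2 p1 + 1 \<and> v2 (p1+p2) \<ge> v2 p1 + 2))"
      by (rule vprops) (use P' in blast)+
    have gge: "gg (v2 q1) (v2 q2) (v2 (q1+q2)) (v2 (q1-q2)) = gg (v2 p1) (v2 p2) (v2 (p1+p2)) (v2 (p1-p2))"
      using that(3) unfolding p p' h_def by simp
    have c: "pe (v2 q1) (v2 q2) (v2 p1) (v2 p2) \<and> pe (v2 (q1+q2)) (v2 (q1-q2)) (v2 (p1+p2)) (v2 (p1-p2))"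
      by (rule comb) (use V V' gge in blast)+
    have "tau m q1 q2 = tau m p1 p2"
      by (rule tau_pe[OF m1]) (use P P' c in blast)+
    then show ?thesis unfolding p p' f_def by simp
  qed
  define F where "F k = f (SOME p. p \<in> D \<and> h p = k)" for k
  have Fh: "F (h p) = f p" if "p \<in> D" for p
  proof -
    have "(SOME p'. p' \<in> D \<and> h p' = h p) \<in> D \<and> h (SOME p'. p' \<in> D \<and> h p' = h p) = h p"
      using someI[of "\<lambda>p'. p' \<in> D \<and> h p' = h p" p] that by blast
    then show ?thesis unfolding F_def using key that by metis
  qed
  have img: "f ` D = F ` (h ` D)"
    using Fh by (auto simp: image_image intro!: image_cong)
  have fin: "finite (h ` D)" using hD finite_subset by blast
  have "card (f ` D) \<le> card (h ` D)" unfolding img by (rule card_image_le[OF fin])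
  also have "\<dots> \<le> card ({1..m-1} \<times> {1..m-1})" using hD by (intro card_mono) auto
  also have "\<dots> = (m-1)^2" by (simp add: card_cartesian_product power2_eq_square)
  finally have "card (f ` D) \<le> (m-1)^2" .
  moreover have "finite (f ` D)" unfolding img using fin by blast
  ultimately show ?thesis unfolding f_def D_def by blast
qed

end
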